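(* Let $p$ be a lattice norm on $\mathbb{R}^2$ with $p((1,0))=1$ which is strictly increasing on the half-line $\{(1,u):u\in[0,\infty)\}$ (i.e. $0\le u<u'$ implies $p((1,u))<p((1,u'))$), and let $\Phi$ be a strictly convex Orlicz function. Assume that for every $x\in L^\Phi(\mu)\setminus\{0\}$ there exists $l\in(0,\infty)$ with $\|x\|_{\Phi,p}=\frac1l p((1,I_\Phi(lx)))$. Then $(L^\Phi(\mu),\|\cdot\|_{\Phi,p})$ is strictly convex.
   Context: $(\Omega,\Sigma,\mu)$ is a $\sigma$-finite complete measure space, $L^0$ the space of (classes of a.e. equal) real measurable functions. An Orlicz function is a function $\Phi:\mathbb{R}\to[0,\infty)$ which is convex, even, vanishes at $0$ and is not identically zero. $I_\Phi(x)=\int_\Omega\Phi(x(t))\,d\mu\in[0,+\infty]$; $L^\Phi(\mu)=\{x\in L^0: I_\Phi(\lambda x)<\infty\text{ for some }\lambda>0\}$. A lattice norm on $\mathbb{R}^2$ is a norm $p$ with $p((u,v))\le p((u',v'))$ whenever $|u|\le|u'|,|v|\le|v'|$; $\|x\|_{\Phi,p}=\inf_{k>0}\frac1k p((1,I_\Phi(kx)))$ with the convention $p((1,+\infty))=+\infty$. A normed space is strictly convex if $\|x\|=\|y\|=1$, $x\ne y$ imply $\|(x+y)/2\|<1$. *)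

theory Defs
  imports "HOL-Analysis.Analysis"
begin

definition orlicz_fun :: "(real \<Rightarrow> real) \<Rightarrow> bool" where
  "orlicz_fun \<Phi> \<longleftrightarrow> (\<forall>t. 0 \<le> \<Phi> t) \<and> convex_on UNIV \<Phi> \<and> (\<forall>t. \<Phi> (-t) = \<Phi> t)
     \<and> \<Phi> 0 = 0 \<and> (\<exists>t. \<Phi> t \<noteq> 0)"

definition strictly_convex_fun :: "(real \<Rightarrow> real) \<Rightarrow> bool" where
  "strictly_convex_fun \<Phi> \<longleftrightarrow> (\<forall>a b c. a \<noteq> b \<and> 0 < c \<and> c < 1 \<longrightarrow>
      \<Phi> (c * a + (1 - c) * b) < c * \<Phi> a + (1 - c) * \<Phi> b)"

definition lattice_norm :: "(real \<times> real \<Rightarrow> real) \<Rightarrow> bool" where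
  "lattice_norm p \<longleftrightarrow>
     (\<forall>u v. p (u, v) = 0 \<longleftrightarrow> u = 0 \<and> v = 0) \<and>
     (\<forall>a u v. p (a * u, a * v) = \<bar>a\<bar> * p (u, v)) \<and>
     (\<forall>u v u' v'. p (u + u', v + v') \<le> p (u, v) + p (u', v')) \<and>
     (\<forall>u v u' v'. \<bar>u\<bar> \<le> \<bar>u'\<bar> \<and> \<bar>v\<bar> \<le> \<bar>v'\<bar> \<longrightarrow> p (u, v) \<le> p (u', v'))"

definition I_Phi :: "'a measure \<Rightarrow> (real \<Rightarrow> real) \<Rightarrow> ('a \<Rightarrow> real) \<Rightarrow> ennreal" where
  "I_Phi M \<Phi> x = (\<integral>\<^sup>+ t. ennreal (\<Phi> (x t)) \<partial>M)"

text \<open>Orlicz space L^\<Phi>: measurable functions (representatives of classes) with I(\<lambda>x) < \<infinity> for some \<lambda> > 0.\<close>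
definition orlicz_space :: "'a measure \<Rightarrow> (real \<Rightarrow> real) \<Rightarrow> ('a \<Rightarrow> real) set" where
  "orlicz_space M \<Phi> = {x \<in> borel_measurable M. \<exists>l>0. I_Phi M \<Phi> (\<lambda>t. l * x t) < \<infinity>}"

definition p_ext :: "(real \<times> real \<Rightarrow> real) \<Rightarrow> ennreal \<Rightarrow> ennreal" where
  "p_ext p i = (if i = \<infinity> then \<infinity> else ennreal (p (1, enn2real i)))"

definition orlicz_p_norm :: "'a measure \<Rightarrow> (real \<Rightarrow> real) \<Rightarrow> (real \<times> real \<Rightarrow> real) \<Rightarrow> ('a \<Rightarrow> real) \<Rightarrow> ennreal" where
  "orlicz_p_norm M \<Phi> p x =
     (INF k\<in>{0<..}. ennreal (1 / k) * p_ext p (I_Phi M \<Phi> (\<lambda>t. k * x t)))"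

end

theory Submission
  imports Defs
begin

lemma p_nonneg:
  assumes "lattice_norm p" shows "0 \<le> p (u, v)"
proof -
  have "p (0,0) \<le> p (u,v)" using assms unfolding lattice_norm_def by auto
  moreover have "p (0,0) = 0" using assms unfolding lattice_norm_def by auto
  ultimately show ?thesis by simp
qed

lemma Phi_meas:
  assumes "orlicz_fun \<Phi>" "f \<in> borel_measurable M"
  shows "(\<lambda>t. \<Phi> (f t)) \<in> borel_measurable M"
proof -
  have "continuous_on UNIV \<Phi>"
    using assms(1) unfolding orlicz_fun_def by (intro convex_on_continuous) auto
  thus ?thesis using assms(2) by (rule borel_measurable_continuous_on)
qed

lemma attain:
  assumes "lattice_norm p" "p (1,0) = 1" "orlicz_fun \<Phi>"
    and hyp: "\<And>x. x \<in> orlicz_space M \<Phi> \<Longrightarrow> \<not> (AE t in M. x t = 0) \<Longrightarrow>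
           \<exists>l>0. orlicz_p_norm M \<Phi> p x = ennreal (1 / l) * p_ext p (I_Phi M \<Phi> (\<lambda>t. l * x t))"
    and x: "x \<in> orlicz_space M \<Phi>" and n: "orlicz_p_norm M \<Phi> p x = 1"
  shows "\<exists>k>0. integrable M (\<lambda>t. \<Phi> (k * x t)) \<and>
     I_Phi M \<Phi> (\<lambda>t. k * x t) = ennreal (integral\<^sup>L M (\<lambda>t. \<Phi> (k * x t))) \<and>
     p (1, integral\<^sup>L M (\<lambda>t. \<Phi> (k * x t))) = k"
proof -
  have xm: "x \<in> borel_measurable M" using x unfolding orlicz_space_def by auto
  have nz: "\<not> (AE t in M. x t = 0)"
  proof
    assume ae: "AE t in M. x t = 0"
    have "I_Phi M \<Phi> (\<lambda>t. 2 * x t) = (\<integral>\<^sup>+ t. ennreal 0 \<partial>M)"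
      unfolding I_Phi_def
      by (rule nn_integral_cong_AE) (use ae assms(3) in \<open>auto simp: orlicz_fun_def\<close>)
    hence I0: "I_Phi M \<Phi> (\<lambda>t. 2 * x t) = 0" by simp
    have "orlicz_p_norm M \<Phi> p x \<le> ennreal (1/2) * p_ext p (I_Phi M \<Phi> (\<lambda>t. 2 * x t))"
      unfolding orlicz_p_norm_def by (rule INF_lower) auto
    also have "\<dots> = ennreal (1/2)" using I0 assms(2) by (simp add: p_ext_def)
    finally have "1 \<le> ennreal (1/2)" using n by simp
    hence "ennreal 1 \<le> ennreal (1/2)" by simp
    hence "(1::real) \<le> 1/2" by (subst (asm) ennreal_le_iff) auto
    thus False by simp
  qed
  obtain k where k: "k > 0" and eq: "1 = ennreal (1 / k) * p_ext p (I_Phi M \<Phi> (\<lambda>t. k * x t))"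
    using hyp[OF x nz] n by auto
  have fin: "I_Phi M \<Phi> (\<lambda>t. k * x t) \<noteq> \<infinity>"
  proof
    assume "I_Phi M \<Phi> (\<lambda>t. k * x t) = \<infinity>"
    hence "ennreal (1 / k) * p_ext p (I_Phi M \<Phi> (\<lambda>t. k * x t)) = \<infinity>"
      using k by (simp add: p_ext_def ennreal_mult_top)
    thus False using eq by simp
  qed
  have meas: "(\<lambda>t. \<Phi> (k * x t)) \<in> borel_measurable M"
    by (rule Phi_meas[OF assms(3)]) (use xm in measurable)
  have nn: "\<And>t. 0 \<le> \<Phi> t" using assms(3) unfolding orlicz_fun_def by auto
  have int: "integrable M (\<lambda>t. \<Phi> (k * x t))"
    using fin meas nn by (intro integrableI_nonneg) (auto simp: I_Phi_def top.not_eq_extremum)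
  have Ieq: "I_Phi M \<Phi> (\<lambda>t. k * x t) = ennreal (integral\<^sup>L M (\<lambda>t. \<Phi> (k * x t)))"
    unfolding I_Phi_def using int nn by (intro nn_integral_eq_integral) auto
  have "1 = ennreal (1 / k) * ennreal (p (1, integral\<^sup>L M (\<lambda>t. \<Phi> (k * x t))))"
    using eq Ieq integral_nonneg_AE[of "\<lambda>t. \<Phi> (k * x t)" M] nn by (simp add: p_ext_def)
  also have "\<dots> = ennreal (p (1, integral\<^sup>L M (\<lambda>t. \<Phi> (k * x t))) / k)"
    using k by (simp add: ennreal_mult'[symmetric])
  finally have "p (1, integral\<^sup>L M (\<lambda>t. \<Phi> (k * x t))) / k = 1"
    using p_nonneg[OF assms(1)] k
    by (metis divide_nonneg_pos ennreal_1 ennreal_inj zero_le_one)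
  hence "p (1, integral\<^sup>L M (\<lambda>t. \<Phi> (k * x t))) = k" using k by simp
  thus ?thesis using k int Ieq by blast
qed

theorem theorem5:
  fixes M :: "'a measure" and \<Phi> :: "real \<Rightarrow> real" and p :: "real \<times> real \<Rightarrow> real"
  assumes "sigma_finite_measure M" and "complete_measure M"
    and "lattice_norm p" and "p (1, 0) = 1"
    and "\<And>u u'. 0 \<le> u \<Longrightarrow> u < u' \<Longrightarrow> p (1, u) < p (1, u')"
    and "orlicz_fun \<Phi>" and "strictly_convex_fun \<Phi>"
    and "\<And>x. x \<in> orlicz_space M \<Phi> \<Longrightarrow> \<not> (AE t in M. x t = 0) \<Longrightarrow>
           \<exists>l>0. orlicz_p_norm M \<Phi> p x = ennreal (1 / l) * p_ext p (I_Phi M \<Phi> (\<lambda>t. l * x t))"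
  shows "\<forall>x\<in>orlicz_space M \<Phi>. \<forall>y\<in>orlicz_space M \<Phi>.
           orlicz_p_norm M \<Phi> p x = 1 \<and> orlicz_p_norm M \<Phi> p y = 1 \<and> \<not> (AE t in M. x t = y t)
           \<longrightarrow> orlicz_p_norm M \<Phi> p (\<lambda>t. (x t + y t) / 2) < 1"
proof (intro ballI impI, elim conjE)
  fix x y assume x: "x \<in> orlicz_space M \<Phi>" and y: "y \<in> orlicz_space M \<Phi>"
    and nx: "orlicz_p_norm M \<Phi> p x = 1" and ny: "orlicz_p_norm M \<Phi> p y = 1"
    and ne: "\<not> (AE t in M. x t = y t)"
  have xm: "x \<in> borel_measurable M" using x unfolding orlicz_space_def by auto
  have ym: "y \<in> borel_measurable M" using y unfolding orlicz_space_def by auto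
  have nn: "\<And>t. 0 \<le> \<Phi> t" using assms(6) unfolding orlicz_fun_def by auto
  obtain k where k: "k > 0" and intx: "integrable M (\<lambda>t. \<Phi> (k * x t))"
    and Ix: "I_Phi M \<Phi> (\<lambda>t. k * x t) = ennreal (integral\<^sup>L M (\<lambda>t. \<Phi> (k * x t)))"
    and px: "p (1, integral\<^sup>L M (\<lambda>t. \<Phi> (k * x t))) = k"
    using attain[OF assms(3,4,6,8) x nx] by blast
  obtain l where l: "l > 0" and inty: "integrable M (\<lambda>t. \<Phi> (l * y t))"
    and Iy: "I_Phi M \<Phi> (\<lambda>t. l * y t) = ennreal (integral\<^sup>L M (\<lambda>t. \<Phi> (l * y t)))"
    and py: "p (1, integral\<^sup>L M (\<lambda>t. \<Phi> (l * y t))) = l"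
    using attain[OF assms(3,4,6,8) y ny] by blast
  define I1 where "I1 = integral\<^sup>L M (\<lambda>t. \<Phi> (k * x t))"
  define I2 where "I2 = integral\<^sup>L M (\<lambda>t. \<Phi> (l * y t))"
  define a where "a = l / (k + l)"
  define h where "h = 2 * k * l / (k + l)"
  have a0: "0 < a" "a < 1" using k l by (auto simp: a_def field_simps)
  have h0: "h > 0" using k l by (simp add: h_def)
  have a1: "1 - a = k / (k + l)" using k l by (simp add: a_def field_simps)
  have hz: "\<And>t. h * ((x t + y t) / 2) = a * (k * x t) + (1 - a) * (l * y t)"
  proof -
    fix t
    have e1: "a * k = k * l / (k + l)" "(1 - a) * l = k * l / (k + l)" "h / 2 = k * l / (k + l)"
      unfolding a1 using k l by (auto simp: a_def h_def field_simps)
    have "h * ((x t + y t) / 2) = (h / 2) * x t + (h / 2) * y t" by (simp add: algebra_simps)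
    also have "\<dots> = (a * k) * x t + ((1 - a) * l) * y t" by (simp only: e1)
    finally show "h * ((x t + y t) / 2) = a * (k * x t) + (1 - a) * (l * y t)" by (simp add: algebra_simps)
  qed
  have ha: "a * k + (1 - a) * l = h"
  proof -
    have "a * k + (1 - a) * l = (l * k + k * l) / (k + l)"
      by (subst a1) (simp add: a_def add_divide_distrib)
    also have "\<dots> = h" unfolding h_def by (simp add: algebra_simps)
    finally show ?thesis .
  qed
  have sc: "\<And>u v. u \<noteq> v \<Longrightarrow> \<Phi> (a * u + (1 - a) * v) < a * \<Phi> u + (1 - a) * \<Phi> v"
    using assms(7) a0 unfolding strictly_convex_fun_def by blast
  have cv: "\<Phi> (a * u + (1 - a) * v) \<le> a * \<Phi> u + (1 - a) * \<Phi> v" for u v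
  proof (cases "u = v")
    case True
    have "a * u + (1 - a) * u = u" by (simp add: algebra_simps)
    thus ?thesis using True by (simp add: algebra_simps)
  next
    case False thus ?thesis using sc[of u v] by simp
  qed
  define g where "g t = \<Phi> (h * ((x t + y t) / 2))" for t
  define G where "G t = a * \<Phi> (k * x t) + (1 - a) * \<Phi> (l * y t)" for t
  have gm: "g \<in> borel_measurable M" unfolding g_def
    by (rule Phi_meas[OF assms(6)]) (use xm ym in measurable)
  have intG: "integrable M G" unfolding G_def using intx inty by auto
  have gG: "g t \<le> G t" for t unfolding g_def G_def hz by (rule cv)
  have gpos: "0 \<le> g t" for t using nn by (simp add: g_def)
  have gnorm: "norm (g t) \<le> norm (G t)" for t using gpos[of t] gG[of t] by simp
  have intg: "integrable M g"
    by (rule Bochner_Integration.integrable_bound[OF intG gm]) (use gnorm in auto)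
  have intGg: "integrable M (\<lambda>t. G t - g t)" using intG intg by auto
  have GI: "integral\<^sup>L M G = a * I1 + (1 - a) * I2"
    unfolding G_def I1_def I2_def using intx inty by simp
  have strict: "integral\<^sup>L M g < a * I1 + (1 - a) * I2"
  proof (rule ccontr)
    assume "\<not> ?thesis"
    moreover have "integral\<^sup>L M g \<le> integral\<^sup>L M G"
      by (rule integral_mono[OF intg intG gG])
    ultimately have "integral\<^sup>L M (\<lambda>t. G t - g t) = 0" using GI intg intG by simp
    hence "AE t in M. G t - g t = 0"
      using integral_nonneg_eq_0_iff_AE[OF intGg] gG by auto
    hence ae: "AE t in M. k * x t = l * y t"
    proof (rule AE_mp, intro AE_I2 impI)
      fix t assume "G t - g t = 0"
      thus "k * x t = l * y t" using sc[of "k * x t" "l * y t"] unfolding g_def G_def hz by force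
    qed
    have "I_Phi M \<Phi> (\<lambda>t. k * x t) = I_Phi M \<Phi> (\<lambda>t. l * y t)"
      unfolding I_Phi_def by (rule nn_integral_cong_AE) (use ae in auto)
    hence "I1 = I2" using Ix Iy integral_nonneg_AE[of "\<lambda>t. \<Phi> (k * x t)" M]
        integral_nonneg_AE[of "\<lambda>t. \<Phi> (l * y t)" M] nn
      unfolding I1_def I2_def by (simp add: ennreal_inj)
    hence "k = l" using px py unfolding I1_def I2_def by simp
    hence "AE t in M. x t = y t" using ae k by auto
    thus False using ne by simp
  qed
  have g0: "0 \<le> integral\<^sup>L M g" using nn by (simp add: g_def)
  have "p (1, integral\<^sup>L M g) < p (1, a * I1 + (1 - a) * I2)"
    by (rule assms(5)[OF g0 strict])
  also have "\<dots> \<le> p (a * 1, a * I1) + p ((1 - a) * 1, (1 - a) * I2)"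
    using assms(3) unfolding lattice_norm_def
    by (metis (no_types, lifting) add_diff_cancel_left' diff_add_cancel mult.right_neutral)
  also have "\<dots> = a * k + (1 - a) * l"
  proof -
    have hom: "\<And>c u v. p (c * u, c * v) = \<bar>c\<bar> * p (u, v)"
      using assms(3) unfolding lattice_norm_def by blast
    show ?thesis using hom[of a 1 I1] hom[of "1 - a" 1 I2] a0 px py
      unfolding I1_def I2_def by simp
  qed
  finally have plt: "p (1, integral\<^sup>L M g) < h" using ha by simp
  have Ig: "I_Phi M \<Phi> (\<lambda>t. h * ((x t + y t) / 2)) = ennreal (integral\<^sup>L M g)"
  proof -
    have gg: "(\<lambda>t. ennreal (\<Phi> (h * ((x t + y t) / 2)))) = (\<lambda>t. ennreal (g t))" unfolding g_def by (rule refl)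
    show ?thesis unfolding I_Phi_def gg using intg gpos
      by (intro nn_integral_eq_integral) auto
  qed
  have "orlicz_p_norm M \<Phi> p (\<lambda>t. (x t + y t) / 2)
      \<le> ennreal (1 / h) * p_ext p (I_Phi M \<Phi> (\<lambda>t. h * ((x t + y t) / 2)))"
    unfolding orlicz_p_norm_def using h0 by (intro INF_lower) auto
  also have "\<dots> = ennreal (p (1, integral\<^sup>L M g) / h)"
    using Ig h0 g0 by (simp add: p_ext_def ennreal_mult'[symmetric])
  also have "\<dots> < 1"
  proof -
    have "p (1, integral\<^sup>L M g) / h < 1" using plt h0 by simp
    hence "ennreal (p (1, integral\<^sup>L M g) / h) < ennreal 1"
      by (subst ennreal_less_iff) (use p_nonneg[OF assms(3)] h0 in auto)
    thus ?thesis by simp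
  qed
  finally show "orlicz_p_norm M \<Phi> p (\<lambda>t. (x t + y t) / 2) < 1" .
qed

end
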